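(* Let $f_1,\dots,f_n:\mathbb{R}^d\to\mathbb{R}$ satisfy Assumptions A1 and A2. Then for all $x\in\mathbb{R}^d$ and $\beta\in\Delta^{n-1}$, \[\|\nabla x^*(\beta)-\widehat{\nabla}x^*(x,\beta)\|_{1,2}\le\frac{1}{\mu}\frac{M_1}{2M_0}\|\nabla f_\beta(x)\|_2.\]
   Context: Assumption A1: each $f_i$ is twice differentiable with $\mu\mathbf{I}\preceq\nabla^2 f_i\preceq L\mathbf{I}$, $0<\mu\le L$, $\kappa:=L/\mu$. Assumption A2: each $\nabla^2 f_i$ is $L_H$-Lipschitz (operator norm). $F=(f_1,\dots,f_n)$, $\nabla F(x)\in\mathbb{R}^{n\times d}$ its Jacobian, $f_\beta=\sum_i\beta_if_i$, $x^*(\beta)=x_\beta=\operatorname{argmin}_x f_\beta(x)$, so $\nabla x^*(\beta)=-\nabla^2f_\beta(x_\beta)^{-1}\nabla F(x_\beta)^\top$. The approximation is $\widehat{\nabla}x^*(x,\beta):=-\nabla^2 f_\beta(x)^{-1}\nabla F(x)^\top$. $R$ is the $\ell_2$-diameter of the Pareto set of $F$ (the set of $x$ with $\nabla f_\beta(x)=0$ for some $\beta\in\Delta^{n-1}$), $M_0:=\kappa R$, $M_1:=2\kappa^2R(1+L_HR/\mu)$. $\|A\|_{1,2}:=\sup_{\|z\|_1=1}\|Az\|_2$. *)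

theory Defs
  imports "HOL-Analysis.Analysis"
begin

definition prob_simplex :: "(real ^ 'n) set" where
  "prob_simplex = {\<beta>. (\<forall>i. 0 \<le> \<beta> $ i) \<and> (\<Sum>i\<in>UNIV. \<beta> $ i) = 1}"

definition fbeta :: "('n::finite \<Rightarrow> real ^ 'd \<Rightarrow> real) \<Rightarrow> real ^ 'n \<Rightarrow> real ^ 'd \<Rightarrow> real" where
  "fbeta f \<beta> x = (\<Sum>i\<in>UNIV. \<beta> $ i * f i x)"

definition gbeta :: "('n::finite \<Rightarrow> real ^ 'd \<Rightarrow> real ^ 'd) \<Rightarrow> real ^ 'n \<Rightarrow> real ^ 'd \<Rightarrow> real ^ 'd" where
  "gbeta g \<beta> x = (\<Sum>i\<in>UNIV. \<beta> $ i *\<^sub>R g i x)"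

definition Hbeta :: "('n::finite \<Rightarrow> real ^ 'd \<Rightarrow> real ^ 'd ^ 'd) \<Rightarrow> real ^ 'n \<Rightarrow> real ^ 'd \<Rightarrow> real ^ 'd ^ 'd" where
  "Hbeta H \<beta> x = (\<Sum>i\<in>UNIV. \<beta> $ i *\<^sub>R H i x)"

text \<open>Transposed Jacobian \<nabla>F(x)^T \<in> R^{d\<times>n}: its i-th column is the gradient of f_i.\<close>
definition jacT :: "('n::finite \<Rightarrow> real ^ 'd \<Rightarrow> real ^ 'd) \<Rightarrow> real ^ 'd \<Rightarrow> real ^ 'n ^ 'd" where
  "jacT g x = (\<chi> k i. g i x $ k)"

definition xstar :: "('n::finite \<Rightarrow> real ^ 'd \<Rightarrow> real) \<Rightarrow> real ^ 'n \<Rightarrow> real ^ 'd" where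
  "xstar f \<beta> = (THE x. \<forall>y. fbeta f \<beta> x \<le> fbeta f \<beta> y)"

definition approx_grad ::
  "('n::finite \<Rightarrow> real ^ 'd \<Rightarrow> real ^ 'd) \<Rightarrow> ('n::finite \<Rightarrow> real ^ 'd \<Rightarrow> real ^ 'd ^ 'd) \<Rightarrow> real ^ 'd \<Rightarrow> real ^ 'n \<Rightarrow> real ^ 'n ^ 'd" where
  "approx_grad g H x \<beta> = - (matrix_inv (Hbeta H \<beta> x) ** jacT g x)"

definition grad_xstar ::
  "('n::finite \<Rightarrow> real ^ 'd \<Rightarrow> real) \<Rightarrow> ('n::finite \<Rightarrow> real ^ 'd \<Rightarrow> real ^ 'd) \<Rightarrow> ('n::finite \<Rightarrow> real ^ 'd \<Rightarrow> real ^ 'd ^ 'd) \<Rightarrow> real ^ 'n \<Rightarrow> real ^ 'n ^ 'd" where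
  "grad_xstar f g H \<beta> = approx_grad g H (xstar f \<beta>) \<beta>"

definition pareto_set :: "('n::finite \<Rightarrow> real ^ 'd \<Rightarrow> real ^ 'd) \<Rightarrow> (real ^ 'd) set" where
  "pareto_set g = {x. \<exists>\<beta>\<in>prob_simplex. gbeta g \<beta> x = 0}"

definition norm12 :: "real ^ 'n ^ 'd \<Rightarrow> real" where
  "norm12 A = Sup {norm (A *v z) | z. (\<Sum>i\<in>UNIV. \<bar>z $ i\<bar>) = 1}"

end

theory Submission imports Defs begin

lemma line_deriv:
  fixes F :: "real^'d::finite \<Rightarrow> real" and G :: "real^'d \<Rightarrow> real^'d"
  assumes F: "\<And>y. (F has_derivative (\<lambda>h. G y \<bullet> h)) (at y)"
  shows "((\<lambda>t. F (x + t *\<^sub>R w)) has_real_derivative (G (x + t *\<^sub>R w) \<bullet> w)) (at t)"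
proof -
  have l: "((\<lambda>t. x + t *\<^sub>R w) has_derivative (\<lambda>h. h *\<^sub>R w)) (at t)"
    by (auto intro!: derivative_eq_intros)
  have "((\<lambda>t. F (x + t *\<^sub>R w)) has_derivative (\<lambda>h. G (x + t *\<^sub>R w) \<bullet> (h *\<^sub>R w))) (at t)"
    by (rule has_derivative_compose[OF l F])
  then show ?thesis unfolding has_field_derivative_def
    by (rule has_derivative_eq_rhs) (auto simp: mult.commute)
qed

lemma line_deriv2:
  fixes G :: "real^'d::finite \<Rightarrow> real^'d" and Hm :: "real^'d \<Rightarrow> real^'d^'d"
  assumes G: "\<And>y. (G has_derivative (\<lambda>h. Hm y *v h)) (at y)"
  shows "((\<lambda>t. G (x + t *\<^sub>R w) \<bullet> w) has_real_derivative (w \<bullet> (Hm (x + t *\<^sub>R w) *v w))) (at t)"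
proof -
  have l: "((\<lambda>t. x + t *\<^sub>R w) has_derivative (\<lambda>h. h *\<^sub>R w)) (at t)"
    by (auto intro!: derivative_eq_intros)
  have "((\<lambda>t. G (x + t *\<^sub>R w)) has_derivative (\<lambda>h. Hm (x + t *\<^sub>R w) *v (h *\<^sub>R w))) (at t)"
    by (rule has_derivative_compose[OF l G])
  then have "((\<lambda>t. G (x + t *\<^sub>R w) \<bullet> w) has_derivative (\<lambda>h. (Hm (x + t *\<^sub>R w) *v (h *\<^sub>R w)) \<bullet> w)) (at t)"
    by (rule has_derivative_inner_left)
  then show ?thesis unfolding has_field_derivative_def
    by (rule has_derivative_eq_rhs) (auto simp: mult.commute inner_commute matrix_vector_mult_scaleR)
qed

lemma quad_upper:
  fixes F :: "real^'d::finite \<Rightarrow> real" and G :: "real^'d \<Rightarrow> real^'d" and Hm :: "real^'d \<Rightarrow> real^'d^'d"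
  assumes F: "\<And>y. (F has_derivative (\<lambda>h. G y \<bullet> h)) (at y)"
    and G: "\<And>y. (G has_derivative (\<lambda>h. Hm y *v h)) (at y)"
    and up: "\<And>y v. v \<bullet> (Hm y *v v) \<le> b * (norm v)\<^sup>2"
  shows "F y \<le> F x + G x \<bullet> (y - x) + b/2 * (norm (y - x))\<^sup>2"
proof -
  define w where "w = y - x"
  define \<psi> where "\<psi> t = F (x + t *\<^sub>R w) - F x - t * (G x \<bullet> w) - b/2 * (norm w)\<^sup>2 * t\<^sup>2" for t
  define \<psi>' where "\<psi>' t = G (x + t *\<^sub>R w) \<bullet> w - G x \<bullet> w - b * (norm w)\<^sup>2 * t" for t
  have d1: "(\<psi> has_real_derivative \<psi>' t) (at t)" for t
    unfolding \<psi>_def[abs_def] \<psi>'_def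
    by (rule derivative_eq_intros line_deriv[OF F] | simp)+
  have d2: "(\<psi>' has_real_derivative (w \<bullet> (Hm (x + t *\<^sub>R w) *v w) - b * (norm w)\<^sup>2)) (at t)" for t
    unfolding \<psi>'_def[abs_def]
    by (rule derivative_eq_intros line_deriv2[OF G] | simp)+
  have p: "\<psi>' t \<le> 0" if "0 \<le> t" for t
  proof -
    have "\<psi>' t \<le> \<psi>' 0"
      by (rule DERIV_nonpos_imp_nonincreasing[OF that]) (use d2 up in fastforce)
    then show ?thesis by (simp add: \<psi>'_def)
  qed
  have "\<psi> 1 \<le> \<psi> 0"
    by (rule DERIV_nonpos_imp_nonincreasing) (use d1 p in auto)
  then show ?thesis by (simp add: \<psi>_def w_def)
qed

lemma mv_neg: "(- A) *v (v::real^'n::finite) = - (A *v v)" for A :: "real^'n^'m::finite"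
  by (simp add: matrix_vector_mult_def vec_eq_iff sum_negf)

lemma quad_lower:
  fixes F :: "real^'d::finite \<Rightarrow> real" and G :: "real^'d \<Rightarrow> real^'d" and Hm :: "real^'d \<Rightarrow> real^'d^'d"
  assumes F: "\<And>y. (F has_derivative (\<lambda>h. G y \<bullet> h)) (at y)"
    and G: "\<And>y. (G has_derivative (\<lambda>h. Hm y *v h)) (at y)"
    and lo: "\<And>y v. a * (norm v)\<^sup>2 \<le> v \<bullet> (Hm y *v v)"
  shows "F x + G x \<bullet> (y - x) + a/2 * (norm (y - x))\<^sup>2 \<le> F y"
proof -
  have F': "\<And>y. ((\<lambda>y. - F y) has_derivative (\<lambda>h. (- G y) \<bullet> h)) (at y)"
    using F by (auto intro!: derivative_eq_intros)
  have G': "\<And>y. ((\<lambda>y. - G y) has_derivative (\<lambda>h. (- Hm y) *v h)) (at y)"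
    using G by (auto intro!: derivative_eq_intros simp: mv_neg)
  have up: "\<And>y v. v \<bullet> ((- Hm y) *v v) \<le> (-a) * (norm v)\<^sup>2"
    using lo by (simp add: mv_neg)
  from quad_upper[OF F' G' up, of y x] show ?thesis by simp
qed

locale sc =
  fixes F :: "real^'d::finite \<Rightarrow> real" and G :: "real^'d \<Rightarrow> real^'d" and Hm :: "real^'d \<Rightarrow> real^'d^'d"
    and \<mu> L :: real
  assumes F: "\<And>y. (F has_derivative (\<lambda>h. G y \<bullet> h)) (at y)"
    and G: "\<And>y. (G has_derivative (\<lambda>h. Hm y *v h)) (at y)"
    and mu_pos: "0 < \<mu>" and mu_le_L: "\<mu> \<le> L"
    and lo: "\<And>y v. \<mu> * (norm v)\<^sup>2 \<le> v \<bullet> (Hm y *v v)"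
    and up: "\<And>y v. v \<bullet> (Hm y *v v) \<le> L * (norm v)\<^sup>2"
begin

lemma L_pos: "0 < L" using mu_pos mu_le_L by linarith

lemma upb: "F y \<le> F x + G x \<bullet> (y - x) + L/2 * (norm (y - x))\<^sup>2"
  by (rule quad_upper[OF F G up])

lemma lob: "F x + G x \<bullet> (y - x) + \<mu>/2 * (norm (y - x))\<^sup>2 \<le> F y"
  by (rule quad_lower[OF F G lo])

lemma grad_zero_at_min:
  assumes m: "\<And>y. F m \<le> F y"
  shows "G m = 0"
proof -
  have "F m \<le> F (m - (1/L) *\<^sub>R G m)" by (rule m)
  also have "\<dots> \<le> F m + G m \<bullet> (- (1/L) *\<^sub>R G m) + L/2 * (norm (- (1/L) *\<^sub>R G m))\<^sup>2"
    using upb[of "m - (1/L) *\<^sub>R G m" m] by simp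
  also have "\<dots> = F m - (norm (G m))\<^sup>2 / (2 * L)"
    using L_pos by (simp add: dot_square_norm power2_eq_square field_simps)
  finally have "(norm (G m))\<^sup>2 / (2 * L) \<le> 0" by simp
  then have "(norm (G m))\<^sup>2 \<le> 0" using L_pos by (simp add: divide_le_0_iff)
  then show ?thesis by simp
qed

lemma dist_bound:
  assumes p: "G p = 0"
  shows "\<mu> * norm (y - p) \<le> norm (G y)"
proof -
  have a: "F y + G y \<bullet> (p - y) + \<mu>/2 * (norm (p - y))\<^sup>2 \<le> F p" by (rule lob)
  have b: "F p + \<mu>/2 * (norm (y - p))\<^sup>2 \<le> F y" using lob[of p y] p by simp
  have c: "G y \<bullet> (y - p) \<le> norm (G y) * norm (y - p)" by (rule norm_cauchy_schwarz)
  have e: "norm (p - y) = norm (y - p)" by (rule norm_minus_commute)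
  have "G y \<bullet> (p - y) = - (G y \<bullet> (y - p))" by (simp add: inner_diff_right)
  with a e have a': "F y - G y \<bullet> (y - p) + \<mu>/2 * (norm (y - p))\<^sup>2 \<le> F p" by simp
  from a' b c have "\<mu> * (norm (y - p))\<^sup>2 \<le> norm (G y) * norm (y - p)" by linarith
  then have d: "(\<mu> * norm (y - p)) * norm (y - p) \<le> norm (G y) * norm (y - p)"
    by (simp add: power2_eq_square mult.assoc)
  show ?thesis
  proof (cases "norm (y - p) = 0")
    case True then show ?thesis using mu_pos by simp
  next
    case False then have "0 < norm (y - p)" by simp
    with d show ?thesis by (rule mult_right_le_imp_le)
  qed
qed

lemma exists_min: "\<exists>m. \<forall>y. F m \<le> F y"
proof -
  define r where "r = 2 * norm (G 0) / \<mu>"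
  have far: "F 0 < F y" if "r < norm y" for y
  proof -
    have r0: "0 \<le> r" using mu_pos by (simp add: r_def)
    have "F 0 + G 0 \<bullet> y + \<mu>/2 * (norm y)\<^sup>2 \<le> F y" using lob[of 0 y] by simp
    moreover have "- (norm (G 0) * norm y) \<le> G 0 \<bullet> y"
      using norm_cauchy_schwarz[of "- G 0" y] by simp
    moreover have "norm (G 0) * norm y < \<mu>/2 * (norm y)\<^sup>2"
    proof -
      have "norm (G 0) = \<mu>/2 * r" using mu_pos by (simp add: r_def)
      then have "norm (G 0) * norm y = \<mu>/2 * r * norm y" by simp
      also have "\<dots> < \<mu>/2 * norm y * norm y"
        using mu_pos that r0 by (intro mult_strict_right_mono mult_strict_left_mono) auto
      finally show ?thesis by (simp add: power2_eq_square)
    qed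
    ultimately show ?thesis by linarith
  qed
  have cont: "continuous_on (cball 0 r) F"
    by (rule continuous_at_imp_continuous_on) (use F has_derivative_continuous in blast)
  have "0 \<in> cball (0::real^'d) r" using mu_pos by (simp add: r_def)
  then obtain m where m: "m \<in> cball 0 r" "\<And>y. y \<in> cball 0 r \<Longrightarrow> F m \<le> F y"
    using continuous_attains_inf[OF compact_cball _ cont] by blast
  have "F m \<le> F y" for y
  proof (cases "y \<in> cball 0 r")
    case True then show ?thesis by (rule m)
  next
    case False
    then have "F 0 < F y" by (intro far) simp
    moreover have "F m \<le> F 0" using m(2) \<open>0 \<in> cball 0 r\<close> by blast
    ultimately show ?thesis by simp
  qed
  then show ?thesis by blast
qed

lemma grad_lip: "norm (G y - G x) \<le> L * norm (y - x)"
proof -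
  have key: "F a - G a \<bullet> a + (norm (G b - G a))\<^sup>2 / (2 * L) \<le> F b - G a \<bullet> b" for a b
  proof -
    define h where "h y = F y - G a \<bullet> y" for y
    define gh where "gh y = G y - G a" for y
    have hd: "(h has_derivative (\<lambda>v. gh y \<bullet> v)) (at y)" for y
      unfolding h_def[abs_def] gh_def
      by (rule has_derivative_eq_rhs, (rule derivative_eq_intros F)+) (auto simp: inner_diff_left)
    have gd: "(gh has_derivative (\<lambda>v. Hm y *v v)) (at y)" for y
      unfolding gh_def[abs_def]
      by (rule has_derivative_eq_rhs, (rule derivative_eq_intros G)+) auto
    define z where "z = b - (1/L) *\<^sub>R gh b"
    have "h a + gh a \<bullet> (z - a) + \<mu>/2 * (norm (z - a))\<^sup>2 \<le> h z"
      by (rule quad_lower[OF hd gd lo])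
    moreover have "0 \<le> \<mu>/2 * (norm (z - a))\<^sup>2" using mu_pos by simp
    ultimately have 1: "h a \<le> h z" by (simp add: gh_def)
    have "h z \<le> h b + gh b \<bullet> (z - b) + L/2 * (norm (z - b))\<^sup>2"
      by (rule quad_upper[OF hd gd up])
    also have "\<dots> = h b - (norm (gh b))\<^sup>2 / (2 * L)"
      using L_pos by (simp add: z_def dot_square_norm power2_eq_square field_simps)
    finally show ?thesis using 1 by (simp add: h_def gh_def)
  qed
  define D where "D = norm (G y - G x)"
  have k1: "F x - G x \<bullet> x + D\<^sup>2 / (2 * L) \<le> F y - G x \<bullet> y" using key[of x y] by (simp add: D_def)
  have k2: "F y - G y \<bullet> y + D\<^sup>2 / (2 * L) \<le> F x - G y \<bullet> x"
    using key[of y x] by (simp add: D_def norm_minus_commute)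
  have ip: "(G y - G x) \<bullet> (y - x) = G x \<bullet> x - G x \<bullet> y + G y \<bullet> y - G y \<bullet> x"
    by (simp add: inner_diff_left inner_diff_right)
  have cs: "(G y - G x) \<bullet> (y - x) \<le> D * norm (y - x)"
    unfolding D_def by (rule norm_cauchy_schwarz)
  have "D\<^sup>2 / L \<le> D * norm (y - x)" using k1 k2 ip cs by (simp add: field_simps)
  then have "D * D \<le> (L * norm (y - x)) * D" using L_pos by (simp add: field_simps power2_eq_square)
  then show ?thesis
  proof (cases "D = 0")
    case True then show ?thesis using L_pos by (simp add: D_def)
  next
    case False then have "0 < D" by (simp add: D_def)
    with \<open>D * D \<le> (L * norm (y - x)) * D\<close> show ?thesis unfolding D_def[symmetric]
      by (simp add: mult_right_le_imp_le)
  qed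
qed

end


lemma mv_scaleR: "(c *\<^sub>R A) *v v = c *\<^sub>R (A *v v)" for A :: "real^'n::finite^'m::finite"
  by (simp add: matrix_vector_mult_def vec_eq_iff sum_distrib_left mult.assoc)

lemma mv_sum: "finite I \<Longrightarrow> (\<Sum>i\<in>I. c i *\<^sub>R A i) *v v = (\<Sum>i\<in>I. c i *\<^sub>R (A i *v v))"
  for A :: "'i \<Rightarrow> real^'n::finite^'m::finite"
  by (induction I rule: finite_induct) (auto simp: matrix_vector_mult_add_rdistrib mv_scaleR)

lemma pd_inv:
  fixes A :: "real^'d::finite^'d"
  assumes mu: "0 < \<mu>" and lo: "\<And>v. \<mu> * (norm v)\<^sup>2 \<le> v \<bullet> (A *v v)"
  shows "A *v (matrix_inv A *v u) = u" "norm (matrix_inv A *v u) \<le> norm u / \<mu>"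
proof -
  have nb: "\<mu> * norm v \<le> norm (A *v v)" for v
  proof -
    have "\<mu> * norm v * norm v \<le> norm (A *v v) * norm v"
    proof -
      have "\<mu> * (norm v * norm v) \<le> norm v * norm (A *v v)"
        using lo[of v] norm_cauchy_schwarz[of v "A *v v"] by (simp add: power2_eq_square)
      then show ?thesis by (metis mult.assoc mult.commute)
    qed
    then show ?thesis
      by (cases "norm v = 0") (auto intro: mult_right_le_imp_le)
  qed
  have "inj ((*v) A)"
  proof (rule injI)
    fix v w assume "A *v v = A *v w"
    then have "A *v (v - w) = 0" by (simp add: matrix_vector_mult_diff_distrib)
    then have "\<mu> * norm (v - w) \<le> 0" using nb[of "v - w"] by simp
    then show "v = w" using mu by (simp add: mult_le_0_iff)
  qed
  then have "invertible A"
    using matrix_left_invertible_injective invertible_left_inverse by blast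
  then have AI: "A ** matrix_inv A = mat 1 \<and> matrix_inv A ** A = mat 1"
    unfolding invertible_def matrix_inv_def by (rule someI_ex)
  show 1: "A *v (matrix_inv A *v u) = u"
    using AI by (simp add: matrix_vector_mul_assoc)
  have "\<mu> * norm (matrix_inv A *v u) \<le> norm u" using nb[of "matrix_inv A *v u"] 1 by simp
  then show "norm (matrix_inv A *v u) \<le> norm u / \<mu>" using mu by (simp add: field_simps)
qed

lemma pd_inv_left:
  fixes A :: "real^'d::finite^'d"
  assumes mu: "0 < \<mu>" and lo: "\<And>v. \<mu> * (norm v)\<^sup>2 \<le> v \<bullet> (A *v v)"
  shows "matrix_inv A *v (A *v v) = v"
proof -
  have "A *v (matrix_inv A *v (A *v v)) = A *v v" by (rule pd_inv(1)[OF mu lo])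
  have nb: "\<mu> * norm w \<le> norm (A *v w)" for w
  proof -
    have "\<mu> * norm w * norm w \<le> norm (A *v w) * norm w"
    proof -
      have "\<mu> * (norm w * norm w) \<le> norm w * norm (A *v w)"
        using lo[of w] norm_cauchy_schwarz[of w "A *v w"] by (simp add: power2_eq_square)
      then show ?thesis by (metis mult.assoc mult.commute)
    qed
    then show ?thesis
      by (cases "norm w = 0") (auto intro: mult_right_le_imp_le)
  qed
  let ?w = "matrix_inv A *v (A *v v) - v"
  have "A *v ?w = 0" using \<open>A *v (matrix_inv A *v (A *v v)) = A *v v\<close>
    by (simp add: matrix_vector_mult_diff_distrib)
  then have "\<mu> * norm ?w \<le> 0" using nb[of ?w] by simp
  then show ?thesis using mu by (simp add: mult_le_0_iff)
qed

context
  fixes f :: "'n::finite \<Rightarrow> real ^ 'd::finite \<Rightarrow> real"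
    and g :: "'n \<Rightarrow> real ^ 'd \<Rightarrow> real ^ 'd"
    and H :: "'n \<Rightarrow> real ^ 'd \<Rightarrow> real ^ 'd ^ 'd"
    and \<mu> L :: real
  assumes grad: "\<And>i y. (f i has_derivative (\<lambda>h. g i y \<bullet> h)) (at y)"
    and hess: "\<And>i y. (g i has_derivative (\<lambda>h. H i y *v h)) (at y)"
    and mu_pos: "0 < \<mu>" and mu_le_L: "\<mu> \<le> L"
    and lower: "\<And>i y v. \<mu> * (norm v)\<^sup>2 \<le> v \<bullet> (H i y *v v)"
    and upper: "\<And>i y v. v \<bullet> (H i y *v v) \<le> L * (norm v)\<^sup>2"
begin

lemma sc_i: "sc (f i) (g i) (H i) \<mu> L"
  by (unfold_locales) (auto intro: grad hess lower upper mu_pos mu_le_L)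

lemma Hbeta_lo:
  assumes beta: "\<beta> \<in> prob_simplex"
  shows "\<mu> * (norm v)\<^sup>2 \<le> v \<bullet> (Hbeta H \<beta> y *v v)"
proof -
  have "\<mu> * (norm v)\<^sup>2 = (\<Sum>i\<in>UNIV. \<beta> $ i * (\<mu> * (norm v)\<^sup>2))"
    using beta by (simp add: prob_simplex_def sum_distrib_right[symmetric])
  also have "\<dots> \<le> (\<Sum>i\<in>UNIV. \<beta> $ i * (v \<bullet> (H i y *v v)))"
    using beta by (intro sum_mono mult_left_mono lower) (auto simp: prob_simplex_def)
  also have "\<dots> = v \<bullet> (Hbeta H \<beta> y *v v)"
    by (simp add: Hbeta_def mv_sum inner_sum_right)
  finally show ?thesis .
qed

lemma Hbeta_up:
  assumes beta: "\<beta> \<in> prob_simplex"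
  shows "v \<bullet> (Hbeta H \<beta> y *v v) \<le> L * (norm v)\<^sup>2"
proof -
  have "v \<bullet> (Hbeta H \<beta> y *v v) = (\<Sum>i\<in>UNIV. \<beta> $ i * (v \<bullet> (H i y *v v)))"
    by (simp add: Hbeta_def mv_sum inner_sum_right)
  also have "\<dots> \<le> (\<Sum>i\<in>UNIV. \<beta> $ i * (L * (norm v)\<^sup>2))"
    using beta by (intro sum_mono mult_left_mono upper) (auto simp: prob_simplex_def)
  also have "\<dots> = L * (norm v)\<^sup>2"
    using beta by (simp add: prob_simplex_def sum_distrib_right[symmetric])
  finally show ?thesis .
qed

lemma sc_beta:
  assumes beta: "\<beta> \<in> prob_simplex"
  shows "sc (fbeta f \<beta>) (gbeta g \<beta>) (Hbeta H \<beta>) \<mu> L"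
proof
  fix y
  have "((\<lambda>x. \<Sum>i\<in>UNIV. \<beta> $ i * f i x) has_derivative (\<lambda>h. \<Sum>i\<in>UNIV. \<beta> $ i * (g i y \<bullet> h))) (at y)"
    by (intro has_derivative_sum has_derivative_mult_right grad)
  moreover have "(\<lambda>h. \<Sum>i\<in>UNIV. \<beta> $ i * (g i y \<bullet> h)) = (\<lambda>h. gbeta g \<beta> y \<bullet> h)"
    by (simp add: gbeta_def inner_sum_left fun_eq_iff)
  ultimately show "(fbeta f \<beta> has_derivative (\<lambda>h. gbeta g \<beta> y \<bullet> h)) (at y)"
    unfolding fbeta_def[abs_def] by simp
  have "((\<lambda>x. \<Sum>i\<in>UNIV. \<beta> $ i *\<^sub>R g i x) has_derivative (\<lambda>h. \<Sum>i\<in>UNIV. \<beta> $ i *\<^sub>R (H i y *v h))) (at y)"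
    by (intro has_derivative_sum has_derivative_scaleR_right hess)
  moreover have "(\<lambda>h. \<Sum>i\<in>UNIV. \<beta> $ i *\<^sub>R (H i y *v h)) = (\<lambda>h. Hbeta H \<beta> y *v h)"
    by (simp add: Hbeta_def mv_sum fun_eq_iff)
  ultimately show "(gbeta g \<beta> has_derivative (\<lambda>h. Hbeta H \<beta> y *v h)) (at y)"
    unfolding gbeta_def[abs_def] by simp
qed (use mu_pos mu_le_L Hbeta_lo[OF beta] Hbeta_up[OF beta] in auto)

end


lemma mv_sum_right: "finite I \<Longrightarrow> A *v (\<Sum>i\<in>I. c i *\<^sub>R v i) = (\<Sum>i\<in>I. c i *\<^sub>R (A *v v i))"
  for A :: "real^'n::finite^'m::finite"
  by (induction I rule: finite_induct) (auto simp: matrix_vector_right_distrib matrix_vector_mult_scaleR)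

lemma jacT_mv: "jacT g y *v z = (\<Sum>i\<in>UNIV. z $ i *\<^sub>R g i y)"
  by (simp add: jacT_def matrix_vector_mult_def vec_eq_iff mult.commute)

lemma gbeta_axis: "gbeta g (axis i 1) y = g i y"
proof -
  have "gbeta g (axis i 1) y = (\<Sum>j\<in>UNIV. (if j = i then g j y else 0))"
    unfolding gbeta_def by (rule sum.cong) (auto simp: axis_def)
  then show ?thesis by simp
qed

lemma axis_simplex: "axis i 1 \<in> prob_simplex"
  by (simp add: prob_simplex_def axis_def)

lemma simplex_le1: "\<beta> \<in> prob_simplex \<Longrightarrow> \<beta> $ i \<le> 1"
  unfolding prob_simplex_def
  using member_le_sum[of i UNIV "\<lambda>i. \<beta> $ i"] by auto

theorem lemma3:
  fixes f :: "'n::finite \<Rightarrow> real ^ 'd::finite \<Rightarrow> real"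
    and g :: "'n \<Rightarrow> real ^ 'd \<Rightarrow> real ^ 'd"
    and H :: "'n \<Rightarrow> real ^ 'd \<Rightarrow> real ^ 'd ^ 'd"
    and \<mu> L L\<^sub>H :: real
    and x :: "real ^ 'd" and \<beta> :: "real ^ 'n"
  assumes grad: "\<And>i y. (f i has_derivative (\<lambda>h. g i y \<bullet> h)) (at y)"
    and hess: "\<And>i y. (g i has_derivative (\<lambda>h. H i y *v h)) (at y)"
    and mu_pos: "0 < \<mu>" and mu_le_L: "\<mu> \<le> L"
    and lower: "\<And>i y v. \<mu> * (norm v)\<^sup>2 \<le> v \<bullet> (H i y *v v)"
    and upper: "\<And>i y v. v \<bullet> (H i y *v v) \<le> L * (norm v)\<^sup>2"
    and lip: "\<And>i y z. onorm (\<lambda>v. (H i y - H i z) *v v) \<le> L\<^sub>H * norm (y - z)"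
    and R_pos: "0 < diameter (pareto_set g)"
    and beta: "\<beta> \<in> prob_simplex"
  shows "let \<kappa> = L / \<mu>; R = diameter (pareto_set g);
             M0 = \<kappa> * R; M1 = 2 * \<kappa>\<^sup>2 * R * (1 + L\<^sub>H * R / \<mu>)
         in norm12 (grad_xstar f g H \<beta> - approx_grad g H x \<beta>)
              \<le> (1 / \<mu>) * (M1 / (2 * M0)) * norm (gbeta g \<beta> x)"
proof -
  define R where "R = diameter (pareto_set g)"
  note scb = sc_beta[OF grad hess mu_pos mu_le_L lower upper]
  note sci = sc_i[OF grad hess mu_pos mu_le_L lower upper]
  have L_pos: "0 < L" using mu_pos mu_le_L by linarith
  interpret B: sc "fbeta f \<beta>" "gbeta g \<beta>" "Hbeta H \<beta>" \<mu> L by (rule scb[OF beta])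
  obtain xb where xbmin: "\<And>y. fbeta f \<beta> xb \<le> fbeta f \<beta> y" using B.exists_min by blast
  have gxb: "gbeta g \<beta> xb = 0" by (rule B.grad_zero_at_min) (rule xbmin)
  have xs: "xstar f \<beta> = xb"
    unfolding xstar_def
  proof (rule the_equality)
    show "\<forall>y. fbeta f \<beta> xb \<le> fbeta f \<beta> y" using xbmin by blast
  next
    fix p assume "\<forall>y. fbeta f \<beta> p \<le> fbeta f \<beta> y"
    then have "gbeta g \<beta> p = 0" by (intro B.grad_zero_at_min) blast
    then have "\<mu> * norm (xb - p) \<le> 0" using B.dist_bound[of p xb] gxb by simp
    then show "p = xb" using mu_pos by (simp add: mult_le_0_iff)
  qed
  have "\<exists>xi. g i xi = 0" for i
  proof -
    interpret I: sc "f i" "g i" "H i" \<mu> L by (rule sci)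
    obtain m where "\<And>y. f i m \<le> f i y" using I.exists_min by blast
    then show ?thesis using I.grad_zero_at_min by blast
  qed
  then obtain xi where gxi: "\<And>i. g i (xi i) = 0" by metis
  define C where "C = (\<Sum>i\<in>UNIV. norm (g i 0))"
  have bnd: "bounded (pareto_set g)"
  proof -
    have "pareto_set g \<subseteq> cball 0 (C / \<mu>)"
    proof
      fix p assume "p \<in> pareto_set g"
      then obtain \<beta>' where b': "\<beta>' \<in> prob_simplex" "gbeta g \<beta>' p = 0"
        unfolding pareto_set_def by blast
      interpret B': sc "fbeta f \<beta>'" "gbeta g \<beta>'" "Hbeta H \<beta>'" \<mu> L by (rule scb[OF b'(1)])
      have "\<mu> * norm (0 - p) \<le> norm (gbeta g \<beta>' 0)" by (rule B'.dist_bound[OF b'(2)])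
      also have "\<dots> \<le> (\<Sum>i\<in>UNIV. norm (\<beta>' $ i *\<^sub>R g i 0))"
        unfolding gbeta_def by (rule norm_sum)
      also have "\<dots> \<le> C" unfolding C_def
      proof (rule sum_mono)
        fix i :: 'n
        have "0 \<le> \<beta>' $ i" "\<beta>' $ i \<le> 1" using b'(1) simplex_le1[OF b'(1)] by (auto simp: prob_simplex_def)
        then show "norm (\<beta>' $ i *\<^sub>R g i 0) \<le> norm (g i 0)"
          by (simp add: mult_left_le_one_le)
      qed
      finally show "p \<in> cball 0 (C / \<mu>)" using mu_pos by (simp add: field_simps)
    qed
    then show ?thesis using bounded_cball bounded_subset by blast
  qed
  have xb_in: "xb \<in> pareto_set g" using beta gxb unfolding pareto_set_def by blast
  have xi_in: "xi i \<in> pareto_set g" for i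
    using axis_simplex[of i] gxi[of i] unfolding pareto_set_def by (metis (mono_tags) gbeta_axis mem_Collect_eq)
  have gib: "norm (g i xb) \<le> L * R" for i
  proof -
    interpret I: sc "f i" "g i" "H i" \<mu> L by (rule sci)
    have "norm (g i xb) = norm (g i xb - g i (xi i))" using gxi by simp
    also have "\<dots> \<le> L * norm (xb - xi i)" by (rule I.grad_lip)
    also have "\<dots> \<le> L * R"
      using diameter_bounded_bound[OF bnd xb_in xi_in[of i]] L_pos
      by (simp add: R_def dist_norm)
    finally show ?thesis .
  qed
  have glip: "norm (g i x - g i xb) \<le> L * norm (x - xb)" for i
  proof -
    interpret I: sc "f i" "g i" "H i" \<mu> L by (rule sci)
    show ?thesis by (rule I.grad_lip)
  qed
  define e where "e = norm (x - xb)"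
  have e_le: "\<mu> * e \<le> norm (gbeta g \<beta> x)" unfolding e_def by (rule B.dist_bound[OF gxb])
  have e0: "0 \<le> e" by (simp add: e_def)
  have R0: "0 < R" using R_pos by (simp add: R_def)
  obtain k :: 'd where True by blast
  obtain j :: 'n where True by blast
  have LH0: "0 \<le> L\<^sub>H"
  proof -
    have "0 \<le> onorm (\<lambda>v. (H j (axis k 1) - H j 0) *v v)"
      by (rule onorm_pos_le) (rule matrix_vector_mul_bounded_linear)
    also have "\<dots> \<le> L\<^sub>H * norm (axis k (1::real) - 0)" by (rule lip)
    finally show ?thesis by simp
  qed
  have Hlip: "norm ((Hbeta H \<beta> y - Hbeta H \<beta> z) *v w) \<le> L\<^sub>H * norm (y - z) * norm w" for y z w
  proof -
    have "(Hbeta H \<beta> y - Hbeta H \<beta> z) *v w = (\<Sum>i\<in>UNIV. \<beta> $ i *\<^sub>R ((H i y - H i z) *v w))"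
      by (simp add: Hbeta_def mv_sum[symmetric] sum_subtractf[symmetric] scaleR_diff_right)
    then have "norm ((Hbeta H \<beta> y - Hbeta H \<beta> z) *v w) \<le> (\<Sum>i\<in>UNIV. norm (\<beta> $ i *\<^sub>R ((H i y - H i z) *v w)))"
      by (simp only:) (rule norm_sum)
    also have "\<dots> \<le> (\<Sum>i\<in>UNIV. \<beta> $ i * (L\<^sub>H * norm (y - z) * norm w))"
    proof (rule sum_mono)
      fix i
      have b0: "0 \<le> \<beta> $ i" using beta by (simp add: prob_simplex_def)
      have "norm ((H i y - H i z) *v w) \<le> onorm (\<lambda>v. (H i y - H i z) *v v) * norm w"
        by (rule onorm) (rule matrix_vector_mul_bounded_linear)
      also have "\<dots> \<le> L\<^sub>H * norm (y - z) * norm w" by (intro mult_right_mono lip) simp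
      finally show "norm (\<beta> $ i *\<^sub>R ((H i y - H i z) *v w)) \<le> \<beta> $ i * (L\<^sub>H * norm (y - z) * norm w)"
        using b0 by (simp add: mult_left_mono)
    qed
    also have "\<dots> = L\<^sub>H * norm (y - z) * norm w"
      using beta by (simp add: prob_simplex_def sum_distrib_right[symmetric])
    finally show ?thesis .
  qed
  define Ax where "Ax = Hbeta H \<beta> x"
  define Ab where "Ab = Hbeta H \<beta> xb"
  define Ix where "Ix = matrix_inv Ax"
  define Ib where "Ib = matrix_inv Ab"
  have loX: "\<And>v. \<mu> * (norm v)\<^sup>2 \<le> v \<bullet> (Ax *v v)" unfolding Ax_def by (rule B.lo)
  have loB: "\<And>v. \<mu> * (norm v)\<^sup>2 \<le> v \<bullet> (Ab *v v)" unfolding Ab_def by (rule B.lo)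
  have Ixn: "norm (Ix *v u) \<le> norm u / \<mu>" for u unfolding Ix_def by (rule pd_inv(2)[OF mu_pos loX])
  have Ibn: "norm (Ib *v u) \<le> norm u / \<mu>" for u unfolding Ib_def by (rule pd_inv(2)[OF mu_pos loB])
  have AbIb: "Ab *v (Ib *v u) = u" for u unfolding Ib_def by (rule pd_inv(1)[OF mu_pos loB])
  have IxAx: "Ix *v (Ax *v v) = v" for v unfolding Ix_def by (rule pd_inv_left[OF mu_pos loX])
  define c where "c = L / \<mu> * e + L\<^sub>H * e * (L * R / \<mu>) / \<mu>"
  have col: "norm (Ix *v g i x - Ib *v g i xb) \<le> c" for i
  proof -
    define u where "u = g i xb"
    have eq: "Ix *v g i x - Ib *v g i xb = Ix *v (g i x - g i xb) + Ix *v ((Ab - Ax) *v (Ib *v u))"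
      by (simp add: u_def matrix_vector_mult_diff_distrib matrix_vector_mult_diff_rdistrib AbIb IxAx)
    have n1: "norm (Ix *v (g i x - g i xb)) \<le> L / \<mu> * e"
      using Ixn[of "g i x - g i xb"] glip[of i] mu_pos
      by (simp add: e_def field_simps)
    have "norm ((Ab - Ax) *v (Ib *v u)) \<le> L\<^sub>H * norm (xb - x) * norm (Ib *v u)"
      unfolding Ab_def Ax_def by (rule Hlip)
    also have "\<dots> = (L\<^sub>H * e) * norm (Ib *v u)" by (simp add: e_def norm_minus_commute)
    also have "\<dots> \<le> (L\<^sub>H * e) * (L * R / \<mu>)"
    proof (rule mult_left_mono)
      show "norm (Ib *v u) \<le> L * R / \<mu>"
        using Ibn[of u] gib[of i] mu_pos by (simp add: u_def) (smt (verit) divide_right_mono)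
      show "0 \<le> L\<^sub>H * e" using LH0 e0 by simp
    qed
    finally have "norm ((Ab - Ax) *v (Ib *v u)) \<le> L\<^sub>H * e * (L * R / \<mu>)" .
    then have n2: "norm (Ix *v ((Ab - Ax) *v (Ib *v u))) \<le> L\<^sub>H * e * (L * R / \<mu>) / \<mu>"
      using Ixn[of "(Ab - Ax) *v (Ib *v u)"] mu_pos
      by (smt (verit) divide_right_mono)
    show ?thesis unfolding eq c_def
      using norm_triangle_ineq[of "Ix *v (g i x - g i xb)" "Ix *v ((Ab - Ax) *v (Ib *v u))"] n1 n2
      by linarith
  qed
  have c0: "0 \<le> c" using col[of j] norm_ge_zero order_trans by blast
  have Dz: "(grad_xstar f g H \<beta> - approx_grad g H x \<beta>) *v z
      = (\<Sum>i\<in>UNIV. z $ i *\<^sub>R (Ix *v g i x - Ib *v g i xb))" for z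
  proof -
    have "(grad_xstar f g H \<beta> - approx_grad g H x \<beta>) *v z
        = Ix *v (jacT g x *v z) - Ib *v (jacT g xb *v z)"
      by (simp add: grad_xstar_def approx_grad_def xs Ix_def Ib_def Ax_def Ab_def
          matrix_vector_mult_diff_rdistrib mv_neg matrix_vector_mul_assoc)
    also have "\<dots> = (\<Sum>i\<in>UNIV. z $ i *\<^sub>R (Ix *v g i x)) - (\<Sum>i\<in>UNIV. z $ i *\<^sub>R (Ib *v g i xb))"
      by (simp add: jacT_mv mv_sum_right)
    also have "\<dots> = (\<Sum>i\<in>UNIV. z $ i *\<^sub>R (Ix *v g i x - Ib *v g i xb))"
      by (simp add: sum_subtractf[symmetric] scaleR_diff_right)
    finally show ?thesis .
  qed
  have n12: "norm12 (grad_xstar f g H \<beta> - approx_grad g H x \<beta>) \<le> c"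
    unfolding norm12_def
  proof (rule cSup_least)
    show "{norm ((grad_xstar f g H \<beta> - approx_grad g H x \<beta>) *v z) |z. (\<Sum>i\<in>UNIV. \<bar>z $ i\<bar>) = 1} \<noteq> {}"
    proof -
      have "(\<Sum>i\<in>UNIV. \<bar>axis j (1::real) $ i\<bar>) = (\<Sum>i\<in>UNIV. axis j (1::real) $ i)"
        by (rule sum.cong) (auto simp: axis_def)
      also have "\<dots> = 1" using axis_simplex[of j] by (simp add: prob_simplex_def)
      finally show ?thesis by blast
    qed
  next
    fix a assume "a \<in> {norm ((grad_xstar f g H \<beta> - approx_grad g H x \<beta>) *v z) |z. (\<Sum>i\<in>UNIV. \<bar>z $ i\<bar>) = 1}"
    then obtain z where z: "(\<Sum>i\<in>UNIV. \<bar>z $ i\<bar>) = 1"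
      and a: "a = norm ((grad_xstar f g H \<beta> - approx_grad g H x \<beta>) *v z)" by blast
    have "a \<le> (\<Sum>i\<in>UNIV. norm (z $ i *\<^sub>R (Ix *v g i x - Ib *v g i xb)))"
      unfolding a Dz by (rule norm_sum)
    also have "\<dots> \<le> (\<Sum>i\<in>UNIV. \<bar>z $ i\<bar> * c)"
      by (rule sum_mono) (simp add: col mult_left_mono)
    also have "\<dots> = c" using z by (simp add: sum_distrib_right[symmetric])
    finally show "a \<le> c" .
  qed
  have "c = e * (L / \<mu> * (1 + L\<^sub>H * R / \<mu>))"
    unfolding c_def using mu_pos by (simp add: field_simps)
  also have "\<dots> \<le> norm (gbeta g \<beta> x) / \<mu> * (L / \<mu> * (1 + L\<^sub>H * R / \<mu>))"
  proof (rule mult_right_mono)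
    show "e \<le> norm (gbeta g \<beta> x) / \<mu>" using e_le mu_pos by (simp add: field_simps)
    show "0 \<le> L / \<mu> * (1 + L\<^sub>H * R / \<mu>)" using mu_pos L_pos LH0 R0 by simp
  qed
  also have "\<dots> = (1 / \<mu>) * ((2 * (L / \<mu>)\<^sup>2 * R * (1 + L\<^sub>H * R / \<mu>)) / (2 * (L / \<mu> * R))) * norm (gbeta g \<beta> x)"
    using mu_pos L_pos R0 by (simp add: field_simps power2_eq_square)
  finally show ?thesis using n12 unfolding Let_def R_def[symmetric] by linarith
qed

end
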